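(* For all $M>0$, all $\alpha>0$, all $q$ with $|q|<1$ and all $\epsilon>0$ there exist constants $C_1,C_2>0$ such that for all $p$ with $|p|<|q|$, \[ C_1\le|(zp^{-\alpha};q)|\,|z|^{-k\alpha}\,|q|^{\binom{k\alpha+1}{2}}\le C_2 \] for all $z$ with $1/M<|z|<M$ and $|1-z/w|>\epsilon$ for every zero $w$ of $z\mapsto(zp^{-\alpha};q)$ and of $z\mapsto(qp^\alpha/z;q)$, where $p=xq^k$ with $|x|=1$ and $k\in\mathbb{R}$.
   Context: $(y;q)=\prod_{r\ge0}(1-yq^r)$. For real $y$, $\binom{y}{2}=y(y-1)/2$. The paper phrases the condition on $z$ as "$z$ away from the zeros". *)

theory Defs
  imports "HOL-Analysis.Analysis"
begin

definition qpoch :: "complex \<Rightarrow> complex \<Rightarrow> complex" where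
  "qpoch y q = (\<Prod>r. 1 - y * q ^ r)"

definition binom2 :: "real \<Rightarrow> real" where
  "binom2 y = y * (y - 1) / 2"

definition zeroset :: "complex \<Rightarrow> real \<Rightarrow> complex \<Rightarrow> complex set" where
  "zeroset p \<alpha> q =
     {w. w \<noteq> 0 \<and> qpoch (w * p powr (-\<alpha>)) q = 0} \<union>
     {w. w \<noteq> 0 \<and> qpoch (q * p powr \<alpha> / w) q = 0}"

end

theory Submission imports Defs begin

lemma exp_le_one_minus: "0 \<le> (x::real) \<Longrightarrow> x \<le> 1/2 \<Longrightarrow> exp (-2*x) \<le> 1 - x"
proof -
  assume x: "0 \<le> x" "x \<le> 1/2"
  have "1 + 2*x \<le> exp (2*x)" using exp_ge_add_one_self by simp
  hence "exp (-2*x) * (1+2*x) \<le> 1"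
    by (metis exp_ge_zero exp_minus_inverse mult.commute mult_left_mono mult_minus_left)
  moreover have "1 \<le> (1-x)*(1+2*x)"
  proof -
    have "0 \<le> x*(1-2*x)" using x by (intro mult_nonneg_nonneg) auto
    thus ?thesis by (simp add: algebra_simps)
  qed
  ultimately have "exp (-2*x) * (1+2*x) \<le> (1-x) * (1+2*x)" by linarith
  moreover have "0 < 1 + 2*x" using x by simp
  ultimately show ?thesis by (rule mult_right_le_imp_le)
qed

lemma geo_sub_sum:
  fixes a :: real and h :: "'i \<Rightarrow> nat"
  assumes "0 \<le> a" "a < 1" "finite S" "inj_on h S"
  shows "(\<Sum>s\<in>S. a ^ h s) \<le> 1/(1-a)"
proof -
  have "(\<Sum>s\<in>S. a ^ h s) = (\<Sum>j\<in>h`S. a ^ j)" using assms by (simp add: sum.reindex)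
  also have "\<dots> \<le> (\<Sum>j. a ^ j)"
    using assms by (intro sum_le_suminf) (auto intro: summable_geometric)
  also have "\<dots> = 1/(1-a)" using assms by (simp add: suminf_geometric)
  finally show ?thesis .
qed

lemma gen_bounds:
  fixes v :: "'i \<Rightarrow> complex" and h :: "'i \<Rightarrow> nat"
  assumes a: "0<a" "a<1" and B: "B>0" and d: "\<delta>>0" and fin: "finite S" and inj: "inj_on h S"
    and vb: "\<And>s. s\<in>S \<Longrightarrow> norm (v s) \<le> B * a^h s"
    and R: "B * a^R \<le> 1/2"
    and low: "\<And>s. s\<in>S \<Longrightarrow> h s < R \<Longrightarrow> norm (1 - v s) \<ge> \<delta>"
  shows "exp(-2*B/(1-a)) * (min 1 \<delta>)^R \<le> (\<Prod>s\<in>S. norm(1 - v s))"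
    and "(\<Prod>s\<in>S. norm(1 - v s)) \<le> exp(B/(1-a))"
proof -
  have gs: "(\<Sum>s\<in>T. a ^ h s) \<le> 1/(1-a)" if "T \<subseteq> S" for T
    using geo_sub_sum[of a T h] a fin inj that by (meson finite_subset inj_on_subset less_imp_le)
  have "(\<Prod>s\<in>S. norm(1 - v s)) \<le> (\<Prod>s\<in>S. exp (B * a^h s))"
  proof (intro prod_mono conjI)
    fix s assume s: "s \<in> S"
    have "norm (1 - v s) \<le> 1 + norm (v s)" by (metis norm_one norm_triangle_ineq4)
    also have "\<dots> \<le> exp (norm (v s))" by (rule exp_ge_add_one_self)
    also have "\<dots> \<le> exp (B * a^h s)" using vb[OF s] by simp
    finally show "norm (1 - v s) \<le> exp (B * a^h s)" .
  qed simp
  also have "\<dots> = exp (B * (\<Sum>s\<in>S. a^h s))" using fin by (simp add: exp_sum sum_distrib_left)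
  also have "\<dots> \<le> exp (B/(1-a))" using gs[of S] B by (simp add: mult_left_mono[of _ _ B, simplified] divide_inverse)
  finally show "(\<Prod>s\<in>S. norm(1 - v s)) \<le> exp(B/(1-a))" .
  define S1 where "S1 = {s\<in>S. h s < R}"
  define S2 where "S2 = {s\<in>S. \<not> h s < R}"
  have un: "S = S1 \<union> S2" "S1 \<inter> S2 = {}" by (auto simp: S1_def S2_def)
  have fins: "finite S1" "finite S2" using fin by (auto simp: S1_def S2_def)
  have cardS1: "card S1 \<le> R"
  proof -
    have "card S1 = card (h ` S1)" using inj by (intro card_image[symmetric]) (auto simp: S1_def intro: inj_on_subset)
    also have "\<dots> \<le> card {..<R}" by (intro card_mono) (auto simp: S1_def)
    finally show ?thesis by simp
  qed
  have p1: "(min 1 \<delta>)^R \<le> (\<Prod>s\<in>S1. norm(1 - v s))"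
  proof -
    have "(min 1 \<delta>)^R \<le> (min 1 \<delta>)^card S1" using cardS1 d by (intro power_decreasing) auto
    also have "\<dots> = (\<Prod>s\<in>S1. min 1 \<delta>)" by simp
    also have "\<dots> \<le> (\<Prod>s\<in>S1. norm(1 - v s))"
      using low d by (intro prod_mono) (auto simp: S1_def min_le_iff_disj)
    finally show ?thesis .
  qed
  have p2: "exp(-2*B/(1-a)) \<le> (\<Prod>s\<in>S2. norm(1 - v s))"
  proof -
    have "exp(-2*B/(1-a)) \<le> exp (-2 * (B * (\<Sum>s\<in>S2. a^h s)))"
    proof -
      have "B * (\<Sum>s\<in>S2. a^h s) \<le> B * (1/(1-a))" using gs[of S2] B by (intro mult_left_mono) (auto simp: S2_def)
      thus ?thesis by simp
    qed
    also have "\<dots> = (\<Prod>s\<in>S2. exp (-2 * (B * a^h s)))" using fins by (simp add: exp_sum sum_distrib_left)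
    also have "\<dots> \<le> (\<Prod>s\<in>S2. norm(1 - v s))"
    proof (intro prod_mono conjI)
      fix s assume s: "s \<in> S2"
      have hs: "B * a^h s \<le> B * a^R" using s a B by (intro mult_left_mono power_decreasing) (auto simp: S2_def)
      have sS: "s \<in> S" using s by (simp add: S2_def)
      have "exp (-2 * (B * a^h s)) \<le> exp (-2 * norm (v s))" using vb[OF sS] by simp
      also have "\<dots> \<le> 1 - norm (v s)" using vb[OF sS] hs R by (intro exp_le_one_minus) auto
      also have "\<dots> \<le> norm (1 - v s)" by (metis norm_one norm_triangle_ineq2)
      finally show "exp (-2 * (B * a^h s)) \<le> norm (1 - v s)" .
    qed simp
    finally show ?thesis .
  qed
  have "exp(-2*B/(1-a)) * (min 1 \<delta>)^R \<le> (\<Prod>s\<in>S2. norm(1 - v s)) * (\<Prod>s\<in>S1. norm(1 - v s))"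
    using p1 p2 d by (intro mult_mono) (auto intro: prod_nonneg)
  also have "\<dots> = (\<Prod>s\<in>S. norm(1 - v s))" using un fins by (simp add: prod.union_disjoint mult.commute)
  finally show "exp(-2*B/(1-a)) * (min 1 \<delta>)^R \<le> (\<Prod>s\<in>S. norm(1 - v s))" .
qed

lemma qconv: "norm (q::complex) < 1 \<Longrightarrow> convergent_prod (\<lambda>r. 1 - c * q^r)"
proof -
  assume q: "norm q < 1"
  have "summable (\<lambda>r. norm c * norm q ^ r)" using q by (intro summable_mult summable_geometric) simp
  hence "summable (\<lambda>r. norm ((1 - c * q^r) - 1))" by (simp add: norm_mult norm_power)
  thus ?thesis by (intro abs_convergent_prod_imp_convergent_prod summable_imp_abs_convergent_prod)
qed

lemma qpoch_lim: "norm (q::complex) < 1 \<Longrightarrow> (\<lambda>m. \<Prod>i\<le>m. norm (1 - c*q^i)) \<longlonglongrightarrow> norm (qpoch c q)"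
proof -
  assume q: "norm q < 1"
  have "(\<lambda>m. \<Prod>i\<le>m. (1 - c*q^i)) \<longlonglongrightarrow> qpoch c q"
    unfolding qpoch_def by (rule convergent_prod_LIMSEQ[OF qconv[OF q]])
  from tendsto_norm[OF this] show ?thesis by (simp add: prod_norm)
qed

lemma qpoch_zero: "norm (q::complex) < 1 \<Longrightarrow> c * q^r = 1 \<Longrightarrow> qpoch c q = 0"
  unfolding qpoch_def
  by (rule has_prod_zeroI[OF convergent_prod_has_prod[OF qconv], of q c r]) auto

lemma gauss_real: "(\<Sum>i<n. real i) = real n * (real n - 1)/2"
  by (induction n) (auto simp: field_simps)

lemma norm_split: "(w::complex) \<noteq> 0 \<Longrightarrow> norm (1 - w) = norm w * norm (1 - inverse w)"
proof -
  assume w: "w \<noteq> 0"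
  have "w * (1 - inverse w) = w - 1" using w by (simp add: algebra_simps)
  hence "norm w * norm (1 - inverse w) = norm (w - 1)" by (metis norm_mult)
  thus ?thesis by (simp add: norm_minus_commute)
qed

theorem lemmaA3:
  fixes M \<alpha> \<epsilon> :: real and q :: complex
  assumes "M > 0" and "\<alpha> > 0" and "norm q < 1" and "\<epsilon> > 0"
  shows "\<exists>C1 C2. C1 > 0 \<and> C2 > 0 \<and>
    (\<forall>p::complex. \<forall>x::complex. \<forall>k::real.
       p \<noteq> 0 \<and> norm p < norm q \<and> norm x = 1 \<and> p = x * q powr k \<longrightarrow>
       (\<forall>z::complex. 1 / M < norm z \<and> norm z < M \<and>
          (\<forall>w\<in>zeroset p \<alpha> q. norm (1 - z / w) > \<epsilon>) \<longrightarrow>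
          C1 \<le> norm (qpoch (z * p powr (-\<alpha>)) q) * norm z powr (- k * \<alpha>)
                 * norm q powr binom2 (k * \<alpha> + 1)
        \<and> norm (qpoch (z * p powr (-\<alpha>)) q) * norm z powr (- k * \<alpha>)
                 * norm q powr binom2 (k * \<alpha> + 1) \<le> C2))"
proof (cases "q = 0")
  case True
  show ?thesis by (rule exI[of _ 1], rule exI[of _ 1]) (simp add: True)
next
  case False
  note M = \<open>M > 0\<close> and al = \<open>\<alpha> > 0\<close> and ep = \<open>\<epsilon> > 0\<close>
  define a where "a = norm q"
  have a0: "0 < a" and a1: "a < 1" using False assms(3) by (auto simp: a_def)
  obtain R where R0: "a ^ R < 1/(2*M)" using real_arch_pow_inv[of "1/(2*M)" a] a1 M by auto
  have R: "M * a ^ R \<le> 1/2" using R0 M by (simp add: field_simps)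
  define e1 where "e1 = exp(-2*M/(1-a))"
  define E1 where "E1 = exp(M/(1-a))"
  define dH where "dH = \<epsilon> * a^R / M"
  have dH: "dH > 0" using ep a0 M by (simp add: dH_def)
  define C1 where "C1 = (e1 * min 1 dH ^ R) * (e1 * min 1 \<epsilon> ^ R) * min 1 (1/M)"
  define C2 where "C2 = E1 * E1 * (max 1 M * (1/a))"
  have C1: "C1 > 0" using dH ep M by (simp add: C1_def e1_def)
  have C2: "C2 > 0" using a0 by (simp add: C2_def E1_def)
  show ?thesis
  proof (rule exI[of _ C1], rule exI[of _ C2], intro conjI C1 C2 allI impI)
    fix p x :: complex and k :: real and z :: complex
    assume H: "p \<noteq> 0 \<and> norm p < norm q \<and> norm x = 1 \<and> p = x * q powr k"
    assume Z: "1 / M < norm z \<and> norm z < M \<and> (\<forall>w\<in>zeroset p \<alpha> q. norm (1 - z / w) > \<epsilon>)"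
    define K where "K = k * \<alpha>"
    have np: "norm p = a powr k" using H by (simp add: a_def norm_mult norm_powr_real_powr')
    have k1: "k > 1"
    proof -
      have "a powr k < a powr 1" using H np a0 by (simp add: a_def)
      hence "a powr k < a" using a0 by simp
      hence "ln (a powr k) < ln a" using a0 ln_less_cancel_iff[of "a powr k" a] by simp
      hence "k * ln a < ln a" by (simp only: ln_powr)
      moreover have "ln a < 0" using a0 a1 by simp
      ultimately show ?thesis using mult_less_cancel_right[of k "ln a" 1] by simp
    qed
    have K0: "K > 0" using k1 al by (simp add: K_def)
    have z0: "z \<noteq> 0" using Z M by auto
    have nz1: "norm z < M" and nz2: "1/M < norm z" using Z by auto
    define y where "y = z * p powr (-\<alpha>)"
    have npa: "norm (p powr (-\<alpha>)) = a powr (-K)"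
      using np a0 by (simp add: norm_powr_real_powr' powr_powr K_def)
    have ny: "norm y = norm z * a powr (-K)" by (simp only: y_def norm_mult npa)
    have p0: "p \<noteq> 0" using H by blast
    have pa0: "p powr \<alpha> \<noteq> 0" using p0 by (simp add: powr_def)
    have pinv: "p powr (-\<alpha>) = inverse (p powr \<alpha>)" by (simp add: powr_minus[symmetric])
    have fac: "\<epsilon> < norm (1 - y * q^r)" for r
    proof -
      define w where "w = p powr \<alpha> / q^r"
      have w0: "w \<noteq> 0" using pa0 False by (simp add: w_def)
      have "qpoch (w * p powr (-\<alpha>)) q = 0"
        using pa0 False by (intro qpoch_zero[of q _ r]) (auto simp: w_def powr_minus assms(3))
      hence "w \<in> zeroset p \<alpha> q" using w0 by (simp add: zeroset_def)
      with Z have "\<epsilon> < norm (1 - z / w)" by auto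
      moreover have "z / w = y * q^r" using pa0 False by (simp add: w_def y_def powr_minus field_simps)
      ultimately show ?thesis by simp
    qed
    have nyq: "norm (y * q^i) = norm z * a powr (real i - K)" for i
      using a0 by (simp add: norm_mult ny norm_power a_def[symmetric] powr_diff powr_minus powr_realpow divide_inverse)
    define n where "n = nat \<lceil>K\<rceil>"
    have n1: "K \<le> real n" and n2: "real n < K + 1" using K0 by (auto simp: n_def) linarith+

    have facle: "\<epsilon> \<le> norm (1 - y * q^r)" for r using fac[of r] by simp
    have tail: "e1 * min 1 \<epsilon> ^ R \<le> (\<Prod>i\<in>{n..m}. norm (1 - y*q^i)) \<and> (\<Prod>i\<in>{n..m}. norm (1 - y*q^i)) \<le> E1" for m
    proof -
      have vb: "norm (y * q^i) \<le> M * a^(i - n)" if "i \<in> {n..m}" for i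
      proof -
        have "a powr (real i - K) \<le> a powr (real (i - n))" using that n1 a0 a1 by (intro powr_mono') (auto simp: of_nat_diff)
        also have "\<dots> = a^(i-n)" using a0 by (simp add: powr_realpow)
        finally have "norm z * a powr (real i - K) \<le> M * a^(i-n)" using nz1 M by (intro mult_mono) auto
        thus ?thesis by (simp add: nyq)
      qed
      have inj: "inj_on (\<lambda>i. i - n) {n..m}" by (auto simp: inj_on_def)
      from gen_bounds[of a M \<epsilon> "{n..m}" "\<lambda>i. i-n" "\<lambda>i. y*q^i" R, OF a0 a1 M ep finite_atLeastAtMost inj vb R facle]
      show ?thesis by (simp add: e1_def E1_def)
    qed
    have y0: "y \<noteq> 0" using ny z0 a0 by auto
    have yq0: "y * q^i \<noteq> 0" for i using y0 False by simp
    define Hv where "Hv = (\<Prod>i<n. norm (1 - inverse (y*q^i)))"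
    define U where "U = (\<Prod>i<n. norm (y*q^i))"
    have head_eq: "(\<Prod>i<n. norm(1 - y*q^i)) = U * Hv"
      unfolding U_def Hv_def prod.distrib[symmetric] by (intro prod.cong refl norm_split yq0)
    have headb: "e1 * min 1 dH ^ R \<le> Hv \<and> Hv \<le> E1"
    proof -
      have vb: "norm (inverse (y * q^i)) \<le> M * a^(n - 1 - i)" if "i \<in> {..<n}" for i
      proof -
        have "norm (inverse (y * q^i)) = inverse (norm z) * a powr (K - real i)"
          by (simp only: norm_inverse nyq) (simp only: inverse_mult_distrib powr_minus[symmetric] minus_diff_eq)
        also have "\<dots> \<le> M * a^(n - 1 - i)"
        proof (intro mult_mono)
          show "inverse (norm z) \<le> M" using nz2 M z0 by (simp add: field_simps)
          have "a powr (K - real i) \<le> a powr (real (n - 1 - i))" using that n2 a0 a1 by (intro powr_mono') (auto simp: of_nat_diff)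
          also have "\<dots> = a^(n - 1 - i)" using a0 by (simp add: powr_realpow)
          finally show "a powr (K - real i) \<le> a^(n - 1 - i)" .
        qed (use M in auto)
        finally show ?thesis .
      qed
      have low: "dH \<le> norm (1 - inverse (y * q^i))" if "i \<in> {..<n}" "n - 1 - i < R" for i
      proof -
        have "a powr (real i - K) \<le> a powr (- real R)" using that n1 a0 a1 by (intro powr_mono') auto
        also have "\<dots> = 1 / a^R" using a0 by (simp add: powr_minus powr_realpow divide_inverse)
        finally have "norm z * a powr (real i - K) \<le> M * (1/a^R)" using nz1 M by (intro mult_mono) auto
        hence u: "norm (y * q^i) \<le> M / a^R" by (simp add: nyq)
        have up: "0 < norm (y * q^i)" using yq0 by simp
        have "dH = \<epsilon> / (M / a^R)" using M a0 by (simp add: dH_def)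
        also have "\<dots> \<le> \<epsilon> / norm (y * q^i)" using u up ep by (intro divide_left_mono) (auto intro!: mult_pos_pos divide_pos_pos simp: M a0)
        also have "\<dots> \<le> norm (1 - y * q^i) / norm (y * q^i)" using facle up by (intro divide_right_mono) auto
        also have "\<dots> = norm (1 - inverse (y * q^i))" using norm_split[OF yq0[of i]] up by simp
        finally show ?thesis .
      qed
      have inj: "inj_on (\<lambda>i. n - 1 - i) {..<n}" by (auto simp: inj_on_def)
      from gen_bounds[of a M dH "{..<n}" "\<lambda>i. n - 1 - i" "\<lambda>i. inverse (y*q^i)" R, OF a0 a1 M dH finite_lessThan inj vb R low]
      show ?thesis by (simp add: e1_def E1_def Hv_def)
    qed
    have Ueq: "U = norm z powr real n * a powr (real n*(real n - 1)/2 - real n * K)"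
    proof -
      have "U = (\<Prod>i<n. norm z * a powr (real i - K))" by (simp add: U_def nyq)
      also have "\<dots> = norm z ^ n * (\<Prod>i<n. a powr (real i - K))" by (simp add: prod.distrib)
      also have "(\<Prod>i<n. a powr (real i - K)) = a powr (\<Sum>i<n. real i - K)" using a0 by (simp add: powr_sum)
      also have "(\<Sum>i<n. real i - K) = real n*(real n - 1)/2 - real n * K" by (simp add: sum_subtractf gauss_real)
      also have "norm z ^ n = norm z powr real n" using z0 by (simp add: powr_realpow)
      finally show ?thesis .
    qed
    define W where "W = norm z powr (-K) * a powr binom2 (K+1)"
    define t where "t = real n - K"
    have t0: "0 \<le> t" and t1: "t < 1" using n1 n2 by (auto simp: t_def)
    have UW: "U * W = norm z powr t * a powr ((t^2 - t)/2)"
    proof -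
      have pz: "norm z powr real n * norm z powr - K = norm z powr (real n - K)"
        using powr_add[of "norm z" "real n" "-K"] by simp
      have "U * W = norm z powr (real n + - K) * a powr ((real n*(real n - 1)/2 - real n * K) + binom2 (K+1))"
        using pz by (simp add: Ueq W_def powr_add)
      also have "(real n*(real n - 1)/2 - real n * K) + binom2 (K+1) = (t^2 - t)/2"
        by (simp add: binom2_def t_def power2_eq_square field_simps)
      finally show ?thesis by (simp add: t_def)
    qed
    have zt: "min 1 (1/M) \<le> norm z powr t \<and> norm z powr t \<le> max 1 M"
    proof (cases "1 \<le> norm z")
      case True
      have "1 \<le> norm z powr t" using True t0 powr_mono[of 0 t "norm z"] z0 by simp
      moreover have "norm z powr t \<le> norm z powr 1" using True t1 by (intro powr_mono) auto
      moreover have "norm z powr 1 = norm z" using z0 by simp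
      moreover have "min 1 (1/M) \<le> 1" "M \<le> max 1 M" by auto
      ultimately show ?thesis using nz1 by linarith
    next
      case False
      have "norm z powr t \<le> norm z powr 0" using False t0 by (intro powr_mono') auto
      moreover have "norm z powr 1 \<le> norm z powr t" using False t1 by (intro powr_mono') auto
      moreover have "norm z powr 1 = norm z" "norm z powr 0 = 1" using z0 by auto
      moreover have "min 1 (1/M) \<le> 1/M" "1 \<le> max 1 M" by auto
      ultimately show ?thesis using nz2 by linarith
    qed
    have at: "1 \<le> a powr ((t^2 - t)/2) \<and> a powr ((t^2 - t)/2) \<le> 1/a"
    proof
      have e0: "(t^2 - t)/2 \<le> 0" using t0 t1 mult_left_le[of t t] by (simp add: power2_eq_square)
      have "a powr 0 \<le> a powr ((t^2 - t)/2)" using e0 a0 a1 by (intro powr_mono') auto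
      thus "1 \<le> a powr ((t^2 - t)/2)" using a0 by simp
      have e1': "-1 \<le> (t^2 - t)/2" proof -
        have "0 \<le> t * t" using t0 by simp
        hence "-2 \<le> t * t - t" using t1 by linarith
        thus ?thesis unfolding power2_eq_square by (simp add: field_simps)
      qed
      have "a powr ((t^2 - t)/2) \<le> a powr (-1)" using a0 a1 by (intro powr_mono'[OF e1']) auto
      also have "a powr (-1) = 1/a" using a0 by (simp add: powr_minus_divide)
      finally show "a powr ((t^2 - t)/2) \<le> 1/a" .
    qed
    have Xb: "min 1 (1/M) \<le> U * W \<and> U * W \<le> max 1 M * (1/a)"
    proof
      have "min 1 (1/M) * 1 \<le> norm z powr t * a powr ((t^2 - t)/2)"
        using zt at by (intro mult_mono) auto
      thus "min 1 (1/M) \<le> U * W" by (simp add: UW)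
      have "norm z powr t * a powr ((t^2 - t)/2) \<le> max 1 M * (1/a)"
        using zt at by (intro mult_mono) auto
      thus "U * W \<le> max 1 M * (1/a)" by (simp add: UW)
    qed
    have split: "(\<Prod>i\<le>m. norm(1-y*q^i)) = U * Hv * (\<Prod>i\<in>{n..m}. norm (1 - y*q^i))" if "n \<le> m" for m
    proof -
      have "{..m} = {..<n} \<union> {n..m}" using that by auto
      hence "(\<Prod>i\<le>m. norm(1-y*q^i)) = (\<Prod>i<n. norm(1-y*q^i)) * (\<Prod>i\<in>{n..m}. norm (1 - y*q^i))"
        by (simp add: prod.union_disjoint ivl_disj_int)
      thus ?thesis by (simp add: head_eq)
    qed
    have UH0: "0 \<le> U * Hv" unfolding U_def Hv_def by (intro mult_nonneg_nonneg prod_nonneg) auto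
    have lim: "(\<lambda>m. \<Prod>i\<le>m. norm (1 - y*q^i)) \<longlonglongrightarrow> norm (qpoch y q)" by (rule qpoch_lim[OF assms(3)])
    have lowQ: "U * Hv * (e1 * min 1 \<epsilon> ^ R) \<le> norm (qpoch y q)"
    proof (rule tendsto_lowerbound[OF lim])
      show "\<forall>\<^sub>F m in sequentially. U * Hv * (e1 * min 1 \<epsilon> ^ R) \<le> (\<Prod>i\<le>m. norm (1 - y*q^i))"
        using tail UH0 by (intro eventually_sequentiallyI[of n]) (auto simp: split intro: mult_left_mono)
    qed simp
    have upQ: "norm (qpoch y q) \<le> U * Hv * E1"
    proof (rule tendsto_upperbound[OF lim])
      show "\<forall>\<^sub>F m in sequentially. U * Hv * E1 \<ge> (\<Prod>i\<le>m. norm (1 - y*q^i))"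
        using tail UH0 by (intro eventually_sequentiallyI[of n]) (auto simp: split intro: mult_left_mono)
    qed simp
    have Lq: "norm (qpoch (z * p powr (-\<alpha>)) q) * norm z powr (- k * \<alpha>) * norm q powr binom2 (k * \<alpha> + 1)
       = norm (qpoch y q) * W" by (simp add: y_def W_def K_def a_def)
    have W0: "0 \<le> W" by (simp add: W_def)
    have Hv0: "0 \<le> Hv" unfolding Hv_def by (intro prod_nonneg) auto
    have "C1 \<le> Hv * (e1 * min 1 \<epsilon> ^ R) * (U * W)"
      unfolding C1_def using headb Xb ep Hv0 M by (intro mult_mono) (auto simp: e1_def)
    also have "\<dots> = U * Hv * (e1 * min 1 \<epsilon> ^ R) * W" by (simp add: ac_simps)
    also have "\<dots> \<le> norm (qpoch y q) * W" using lowQ W0 by (intro mult_right_mono)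
    finally have G1: "C1 \<le> norm (qpoch y q) * W" .
    have "norm (qpoch y q) * W \<le> U * Hv * E1 * W" using upQ W0 by (intro mult_right_mono)
    also have "\<dots> = Hv * E1 * (U * W)" by (simp add: ac_simps)
    also have "\<dots> \<le> C2"
      unfolding C2_def
    proof (rule mult_mono)
      show "Hv * E1 \<le> E1 * E1" using headb by (intro mult_right_mono) (auto simp: E1_def)
      show "U * W \<le> max 1 M * (1 / a)" using Xb by simp
      show "0 \<le> E1 * E1" by (simp add: E1_def)
      show "0 \<le> U * W" using UH0 W0 unfolding U_def by (intro mult_nonneg_nonneg prod_nonneg) auto
    qed
    finally have G2: "norm (qpoch y q) * W \<le> C2" .
    show "C1 \<le> norm (qpoch (z * p powr (-\<alpha>)) q) * norm z powr (- k * \<alpha>)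
                 * norm q powr binom2 (k * \<alpha> + 1)" using G1 Lq by simp
    show "norm (qpoch (z * p powr (-\<alpha>)) q) * norm z powr (- k * \<alpha>)
                 * norm q powr binom2 (k * \<alpha> + 1) \<le> C2" using G2 Lq by simp
  qed
qed

end
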